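(* Let $F\in\mathbb{C}^{n\times n}$ be an orthonormal (unitary) matrix such that every entry satisfies $|F_{ij}|\le\alpha/\sqrt{n}$ for an absolute constant $\alpha$. Then there is a constant $c>0$ depending only on $\alpha$ such that if $t\le c\,n/k$, the matrix $M=[F^{-1}\;\; I]\in\mathbb{C}^{n\times 2n}$ satisfies the $((3k,3t),\delta)$-RIP with $\delta\le 0.1$; that is, for every $v=\begin{bmatrix}\hat{x}\\ e\end{bmatrix}\in\mathbb{C}^{2n}$ with $\hat{x}\in\mathbb{C}^n$ $3k$-sparse and $e\in\mathbb{C}^n$ $3t$-sparse, $$(1-\delta)\|v\|\le\|Mv\|\le(1+\delta)\|v\|.$$
   Context: $\|\cdot\|$ denotes the Euclidean norm. A vector is $k$-sparse if it has at most $k$ nonzero entries. $I$ is the $n\times n$ identity matrix and $Mv=F^{-1}\hat{x}+e$. *)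

theory Defs
  imports "HOL-Analysis.Analysis"
begin

text \<open>n x n complex matrices are functions nat => nat => complex, only entries with
  indices < n matter; vectors in C^n are functions nat => complex on indices < n.\<close>

definition unitary_mat :: "nat \<Rightarrow> (nat \<Rightarrow> nat \<Rightarrow> complex) \<Rightarrow> bool" where
  "unitary_mat n F \<longleftrightarrow>
     (\<forall>i<n. \<forall>j<n. (\<Sum>l<n. cnj (F l i) * F l j) = (if i = j then 1 else 0)) \<and>
     (\<forall>i<n. \<forall>j<n. (\<Sum>l<n. F i l * cnj (F j l)) = (if i = j then 1 else 0))"

definition mat_mult :: "nat \<Rightarrow> (nat \<Rightarrow> nat \<Rightarrow> complex) \<Rightarrow> (nat \<Rightarrow> nat \<Rightarrow> complex) \<Rightarrow> nat \<Rightarrow> nat \<Rightarrow> complex" where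
  "mat_mult n A B = (\<lambda>i j. \<Sum>l<n. A i l * B l j)"

definition is_inverse_mat :: "nat \<Rightarrow> (nat \<Rightarrow> nat \<Rightarrow> complex) \<Rightarrow> (nat \<Rightarrow> nat \<Rightarrow> complex) \<Rightarrow> bool" where
  "is_inverse_mat n G F \<longleftrightarrow>
     (\<forall>i<n. \<forall>j<n. mat_mult n G F i j = (if i = j then 1 else 0)) \<and>
     (\<forall>i<n. \<forall>j<n. mat_mult n F G i j = (if i = j then 1 else 0))"

definition sparse :: "nat \<Rightarrow> nat \<Rightarrow> (nat \<Rightarrow> complex) \<Rightarrow> bool" where
  "sparse n s x \<longleftrightarrow> card {i. i < n \<and> x i \<noteq> 0} \<le> s"

definition mat_vec :: "nat \<Rightarrow> (nat \<Rightarrow> nat \<Rightarrow> complex) \<Rightarrow> (nat \<Rightarrow> complex) \<Rightarrow> nat \<Rightarrow> complex" where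
  "mat_vec n A x = (\<lambda>i. \<Sum>j<n. A i j * x j)"

definition vnorm :: "nat \<Rightarrow> (nat \<Rightarrow> complex) \<Rightarrow> real" where
  "vnorm n x = sqrt (\<Sum>i<n. (cmod (x i))\<^sup>2)"

definition vnorm2 :: "nat \<Rightarrow> (nat \<Rightarrow> complex) \<Rightarrow> (nat \<Rightarrow> complex) \<Rightarrow> real" where
  "vnorm2 n x e = sqrt ((\<Sum>i<n. (cmod (x i))\<^sup>2) + (\<Sum>i<n. (cmod (e i))\<^sup>2))"

end

theory Submission
  imports Defs
begin

lemma G_adj:
  assumes U: "unitary_mat n F" and I: "is_inverse_mat n G F" and i: "i < n" and j: "j < n"
  shows "G i j = cnj (F j i)"
proof -
  have U2: "\<And>a b. a < n \<Longrightarrow> b < n \<Longrightarrow> (\<Sum>l<n. F a l * cnj (F b l)) = (if a = b then 1 else 0)"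
    using U unfolding unitary_mat_def by blast
  have I1: "\<And>a b. a < n \<Longrightarrow> b < n \<Longrightarrow> (\<Sum>l<n. G a l * F l b) = (if a = b then 1 else 0)"
    using I unfolding is_inverse_mat_def mat_mult_def by blast
  have "G i j = (\<Sum>l<n. G i l * (if l = j then 1 else 0))"
    using j by (simp add: if_distrib cong: if_cong)
  also have "\<dots> = (\<Sum>l<n. G i l * (\<Sum>m<n. F l m * cnj (F j m)))"
    using U2 j by (intro sum.cong) auto
  also have "\<dots> = (\<Sum>l<n. \<Sum>m<n. G i l * F l m * cnj (F j m))"
    by (simp add: sum_distrib_left mult.assoc)
  also have "\<dots> = (\<Sum>m<n. \<Sum>l<n. G i l * F l m * cnj (F j m))"
    by (rule sum.swap)
  also have "\<dots> = (\<Sum>m<n. (\<Sum>l<n. G i l * F l m) * cnj (F j m))"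
    by (simp add: sum_distrib_right)
  also have "\<dots> = (\<Sum>m<n. (if m = i then cnj (F j m) else 0))"
    using I1 i by (intro sum.cong) auto
  also have "\<dots> = cnj (F j i)"
    using i by simp
  finally show ?thesis .
qed

lemma norm_pres:
  assumes U: "unitary_mat n F" and I: "is_inverse_mat n G F"
  shows "(\<Sum>i<n. (cmod (mat_vec n G x i))\<^sup>2) = (\<Sum>i<n. (cmod (x i))\<^sup>2)"
proof -
  have U2: "\<And>a b. a < n \<Longrightarrow> b < n \<Longrightarrow> (\<Sum>l<n. F a l * cnj (F b l)) = (if a = b then 1 else 0)"
    using U unfolding unitary_mat_def by blast
  have Gc: "\<And>a b. a < n \<Longrightarrow> b < n \<Longrightarrow> G a b = cnj (F b a)"
    using G_adj[OF U I] by blast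
  have "complex_of_real (\<Sum>i<n. (cmod (mat_vec n G x i))\<^sup>2)
      = (\<Sum>i<n. mat_vec n G x i * cnj (mat_vec n G x i))"
    by (simp only: of_real_sum complex_norm_square)
  also have "\<dots> = (\<Sum>i<n. (\<Sum>j<n. G i j * x j) * (\<Sum>l<n. cnj (G i l) * cnj (x l)))"
    by (simp add: mat_vec_def)
  also have "\<dots> = (\<Sum>i<n. \<Sum>j<n. \<Sum>l<n. (G i j * x j) * (cnj (G i l) * cnj (x l)))"
    by (simp add: sum_product)
  also have "\<dots> = (\<Sum>j<n. \<Sum>i<n. \<Sum>l<n. (G i j * x j) * (cnj (G i l) * cnj (x l)))"
    by (rule sum.swap)
  also have "\<dots> = (\<Sum>j<n. \<Sum>l<n. \<Sum>i<n. (G i j * x j) * (cnj (G i l) * cnj (x l)))"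
    by (intro sum.cong refl sum.swap)
  also have "\<dots> = (\<Sum>j<n. \<Sum>l<n. x j * cnj (x l) * (\<Sum>i<n. G i j * cnj (G i l)))"
    by (simp add: sum_distrib_left mult_ac)
  also have "\<dots> = (\<Sum>j<n. \<Sum>l<n. x j * cnj (x l) * (if j = l then 1 else 0))"
  proof (intro sum.cong refl)
    fix j l assume "j \<in> {..<n}" "l \<in> {..<n}"
    then have "(\<Sum>i<n. G i j * cnj (G i l)) = (\<Sum>i<n. cnj (F j i) * F l i)"
      using Gc by (intro sum.cong) auto
    also have "\<dots> = cnj (\<Sum>i<n. F j i * cnj (F l i))" by simp
    also have "\<dots> = (if j = l then 1 else 0)" using U2 \<open>j \<in> _\<close> \<open>l \<in> _\<close> by simp
    finally show "x j * cnj (x l) * (\<Sum>i<n. G i j * cnj (G i l)) = x j * cnj (x l) * (if j = l then 1 else 0)" by simp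
  qed
  also have "\<dots> = (\<Sum>j<n. x j * cnj (x j))"
    by (simp add: if_distrib cong: if_cong)
  also have "\<dots> = complex_of_real (\<Sum>i<n. (cmod (x i))\<^sup>2)"
    by (simp only: of_real_sum complex_norm_square)
  finally show ?thesis using of_real_eq_iff by blast
qed


lemma ybound:
  assumes U: "unitary_mat n F" and B: "\<forall>i<n. \<forall>j<n. cmod (F i j) \<le> a / sqrt (real n)"
    and I: "is_inverse_mat n G F" and i: "i < n"
  shows "(cmod (mat_vec n G x i))\<^sup>2 \<le> a\<^sup>2 / real n * real (card {j. j < n \<and> x j \<noteq> 0}) * (\<Sum>j<n. (cmod (x j))\<^sup>2)"
proof -
  define S where "S = {j. j < n \<and> x j \<noteq> 0}"
  have SS: "S \<subseteq> {..<n}" "finite S" unfolding S_def by auto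
  have "cmod (mat_vec n G x i) \<le> (\<Sum>j<n. cmod (G i j * x j))"
    unfolding mat_vec_def by (rule norm_sum)
  also have "\<dots> \<le> (\<Sum>j<n. a / sqrt (real n) * cmod (x j))"
  proof (intro sum_mono)
    fix j assume "j \<in> {..<n}"
    then have "cmod (G i j) \<le> a / sqrt (real n)" using G_adj[OF U I i] B i by simp
    then show "cmod (G i j * x j) \<le> a / sqrt (real n) * cmod (x j)"
      unfolding norm_mult by (rule mult_right_mono) simp_all
  qed
  also have "\<dots> = a / sqrt (real n) * (\<Sum>j\<in>S. cmod (x j))"
  proof -
    have "(\<Sum>j<n. cmod (x j)) = (\<Sum>j\<in>S. cmod (x j))"
      by (rule sum.mono_neutral_right) (auto simp: S_def)
    then show ?thesis by (simp only: sum_distrib_left[symmetric])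
  qed
  finally have le1: "cmod (mat_vec n G x i) \<le> a / sqrt (real n) * (\<Sum>j\<in>S. cmod (x j))" .
  have "(cmod (mat_vec n G x i))\<^sup>2 \<le> (a / sqrt (real n) * (\<Sum>j\<in>S. cmod (x j)))\<^sup>2"
    using le1 by (intro power_mono) auto
  also have "\<dots> = a\<^sup>2 / real n * (\<Sum>j\<in>S. cmod (x j))\<^sup>2"
    by (simp add: power_mult_distrib power_divide)
  also have "\<dots> \<le> a\<^sup>2 / real n * ((\<Sum>j\<in>S. (cmod (x j))\<^sup>2) * real (card S))"
    by (intro mult_left_mono sum_squared_le_sum_of_squares) auto
  also have "(\<Sum>j\<in>S. (cmod (x j))\<^sup>2) = (\<Sum>j<n. (cmod (x j))\<^sup>2)"
    by (rule sum.mono_neutral_left) (auto simp: S_def)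
  finally show ?thesis by (simp add: S_def mult_ac)
qed


lemma aux: "(r::real) \<le> 0.009 * p \<Longrightarrow> 4 * p \<le> q \<Longrightarrow> 0 \<le> q \<Longrightarrow> 4 * r \<le> 0.0361 * q"
  by simp

lemma core:
  fixes a c :: real
  assumes U: "unitary_mat n F" and B: "\<forall>i<n. \<forall>j<n. cmod (F i j) \<le> a / sqrt (real n)"
    and I: "is_inverse_mat n G F" and n: "n > 0"
    and tk: "real t * real k \<le> c * real n" and ca: "9 * c * a\<^sup>2 \<le> 0.009"
    and sx: "sparse n (3 * k) x" and se: "sparse n (3 * t) e"
  shows "(1 - 0.1) * vnorm2 n x e \<le> vnorm n (\<lambda>i. mat_vec n G x i + e i) \<and>
       vnorm n (\<lambda>i. mat_vec n G x i + e i) \<le> (1 + 0.1) * vnorm2 n x e"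
proof -
  define y where "y = mat_vec n G x"
  define X where "X = (\<Sum>i<n. (cmod (x i))\<^sup>2)"
  define E where "E = (\<Sum>i<n. (cmod (e i))\<^sup>2)"
  define S where "S = {j. j < n \<and> x j \<noteq> 0}"
  define T where "T = {j. j < n \<and> e j \<noteq> 0}"
  define R where "R = (\<Sum>i<n. y i \<bullet> e i)"
  have T: "T \<subseteq> {..<n}" "finite T" unfolding T_def by auto
  have cS: "real (card S) \<le> 3 * real k" using sx unfolding sparse_def S_def by simp
  have cT: "real (card T) \<le> 3 * real t" using se unfolding sparse_def T_def by simp
  have X0: "X \<ge> 0" "E \<ge> 0" unfolding X_def E_def by (auto intro: sum_nonneg)
  have Y: "(\<Sum>i<n. (cmod (y i))\<^sup>2) = X"
    unfolding y_def X_def by (rule norm_pres[OF U I])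
  have N2: "(\<Sum>i<n. (cmod (y i + e i))\<^sup>2) = X + E + 2 * R"
  proof -
    have "(\<Sum>i<n. (cmod (y i + e i))\<^sup>2) = (\<Sum>i<n. (cmod (y i))\<^sup>2 + (cmod (e i))\<^sup>2 + 2 * (y i \<bullet> e i))"
      by (intro sum.cong refl) (simp only: cmod_power2 inner_complex_def plus_complex.sel, simp add: power2_eq_square algebra_simps)
    then show ?thesis using Y unfolding E_def R_def by (simp add: sum.distrib sum_distrib_left)
  qed
  have R1: "\<bar>R\<bar> \<le> (\<Sum>i\<in>T. cmod (y i) * cmod (e i))"
  proof -
    have "\<bar>R\<bar> \<le> (\<Sum>i<n. \<bar>y i \<bullet> e i\<bar>)" unfolding R_def by (rule sum_abs)
    also have "\<dots> \<le> (\<Sum>i<n. cmod (y i) * cmod (e i))" by (intro sum_mono Cauchy_Schwarz_ineq2)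
    also have "\<dots> = (\<Sum>i\<in>T. cmod (y i) * cmod (e i))"
      by (rule sum.mono_neutral_right) (auto simp: T_def)
    finally show ?thesis .
  qed
  have R2: "R\<^sup>2 \<le> (\<Sum>i\<in>T. (cmod (y i))\<^sup>2) * E"
  proof -
    have "R\<^sup>2 \<le> (\<Sum>i\<in>T. cmod (y i) * cmod (e i))\<^sup>2"
      using R1 by (metis abs_ge_zero abs_le_square_iff abs_of_nonneg order_trans)
    also have "\<dots> \<le> (\<Sum>i\<in>T. (cmod (y i))\<^sup>2) * (\<Sum>i\<in>T. (cmod (e i))\<^sup>2)"
      by (rule Cauchy_Schwarz_ineq_sum)
    also have "(\<Sum>i\<in>T. (cmod (e i))\<^sup>2) = E"
      unfolding E_def by (rule sum.mono_neutral_left) (auto simp: T_def)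
    finally show ?thesis .
  qed
  have yb: "\<And>i. i < n \<Longrightarrow> (cmod (y i))\<^sup>2 \<le> a\<^sup>2 / real n * real (card S) * X"
    unfolding y_def X_def S_def by (rule ybound[OF U B I])
  have "(\<Sum>i\<in>T. (cmod (y i))\<^sup>2) \<le> (\<Sum>i\<in>T. a\<^sup>2 / real n * real (card S) * X)"
    using yb T by (intro sum_mono) auto
  also have "\<dots> = real (card T) * real (card S) * a\<^sup>2 / real n * X" by simp
  also have "\<dots> \<le> (3 * real t) * (3 * real k) * a\<^sup>2 / real n * X"
    using cS cT X0 n by (intro mult_right_mono divide_right_mono mult_mono) auto
  also have "\<dots> = 9 * a\<^sup>2 * (real t * real k) / real n * X" by simp
  also have "\<dots> \<le> 9 * a\<^sup>2 * (c * real n) / real n * X"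
    using tk X0 n by (intro mult_right_mono divide_right_mono mult_left_mono) auto
  also have "\<dots> = 9 * c * a\<^sup>2 * X" using n by simp
  also have "\<dots> \<le> 0.009 * X" using ca X0 by (intro mult_right_mono) auto
  finally have YT: "(\<Sum>i\<in>T. (cmod (y i))\<^sup>2) \<le> 0.009 * X" .
  have "R\<^sup>2 \<le> 0.009 * X * E"
    using R2 YT X0 by (meson mult_right_mono order_trans)
  moreover have "4 * (X * E) \<le> (X + E)\<^sup>2"
  proof -
    have "0 \<le> (X - E)\<^sup>2" by simp
    then show ?thesis by (simp add: power2_eq_square algebra_simps)
  qed
  moreover have "0 \<le> (X + E)\<^sup>2" by simp
  moreover have "(0.19 * (X + E))\<^sup>2 = 0.0361 * (X + E)\<^sup>2"
    by (simp only: power_mult_distrib) (simp add: power2_eq_square)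
  moreover have "(2 * R)\<^sup>2 = 4 * R\<^sup>2" by simp
  ultimately have "(2 * R)\<^sup>2 \<le> (0.19 * (X + E))\<^sup>2"
    using aux[of "R\<^sup>2" "X * E" "(X + E)\<^sup>2"] by (simp only: mult.assoc)
  then have "\<bar>2 * R\<bar> \<le> \<bar>0.19 * (X + E)\<bar>" by (simp only: abs_le_square_iff)
  then have Rb: "\<bar>2 * R\<bar> \<le> 0.19 * (X + E)" using X0 by simp
  have vn: "vnorm n (\<lambda>i. mat_vec n G x i + e i) = sqrt (X + E + 2 * R)"
    unfolding vnorm_def N2[symmetric] y_def ..
  have v2: "vnorm2 n x e = sqrt (X + E)" unfolding vnorm2_def X_def E_def ..
  have q1: "sqrt 0.81 = (1 - 0.1::real)" by (rule real_sqrt_unique) (simp_all add: power2_eq_square)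
  have q2: "sqrt 1.21 = (1 + 0.1::real)" by (rule real_sqrt_unique) (simp_all add: power2_eq_square)
  have s1: "(1 - 0.1) * sqrt (X + E) = sqrt (0.81 * (X + E))"
    by (simp only: real_sqrt_mult q1)
  have s2: "(1 + 0.1) * sqrt (X + E) = sqrt (1.21 * (X + E))"
    by (simp only: real_sqrt_mult q2)
  show ?thesis unfolding vn v2 s1 s2 using Rb by (auto intro!: real_sqrt_le_mono)
qed


theorem lemma2:
  fixes \<alpha> :: real
  shows "\<exists>c>0. \<forall>(n::nat) F G (k::nat) (t::nat) x e.
     unitary_mat n F \<and>
     (\<forall>i<n. \<forall>j<n. cmod (F i j) \<le> \<alpha> / sqrt (real n)) \<and>
     is_inverse_mat n G F \<and>
     real t \<le> c * real n / real k \<and>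
     sparse n (3 * k) x \<and> sparse n (3 * t) e \<longrightarrow>
       (1 - 0.1) * vnorm2 n x e \<le> vnorm n (\<lambda>i. mat_vec n G x i + e i) \<and>
       vnorm n (\<lambda>i. mat_vec n G x i + e i) \<le> (1 + 0.1) * vnorm2 n x e"
proof -
  define c where "c = 1 / (1000 * (\<alpha>\<^sup>2 + 1))"
  have d0: "0 < 1000 * (\<alpha>\<^sup>2 + 1)" by (simp add: add_nonneg_pos)
  have c0: "c > 0" unfolding c_def using d0 by simp
  have ca: "9 * c * \<alpha>\<^sup>2 \<le> 0.009"
  proof -
    have "9 * c * \<alpha>\<^sup>2 = 9 * \<alpha>\<^sup>2 / (1000 * (\<alpha>\<^sup>2 + 1))" unfolding c_def by simp
    also have "\<dots> \<le> 0.009" using d0 by (simp add: divide_le_eq)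
    finally show ?thesis .
  qed
  show ?thesis
  proof (rule exI[of _ c], rule conjI[OF c0], intro allI impI)
    fix n F G k t x e
    assume H: "unitary_mat n F \<and>
     (\<forall>i<n. \<forall>j<n. cmod (F i j) \<le> \<alpha> / sqrt (real n)) \<and>
     is_inverse_mat n G F \<and>
     real t \<le> c * real n / real k \<and>
     sparse n (3 * k) x \<and> sparse n (3 * t) e"
    show "(1 - 0.1) * vnorm2 n x e \<le> vnorm n (\<lambda>i. mat_vec n G x i + e i) \<and>
       vnorm n (\<lambda>i. mat_vec n G x i + e i) \<le> (1 + 0.1) * vnorm2 n x e"
    proof (cases "n = 0")
      case True
      then show ?thesis by (simp add: vnorm_def vnorm2_def)
    next
      case False
      have tk: "real t * real k \<le> c * real n"
      proof (cases "k = 0")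
        case True
        then show ?thesis using c0 by simp
      next
        case False
        then have "real k > 0" by simp
        then show ?thesis using H by (simp add: pos_le_divide_eq)
      qed
      show ?thesis
        by (rule core[of n F \<alpha> G t k c x e]) (use H False tk ca in auto)
    qed
  qed
qed

end
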